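(* Let $f$ be an affine signal flow graph with initial state $f_0$. For every finite computation $t\vdash f_0\xrightarrow[v_t]{u_t}f_1\xrightarrow[v_{t+1}]{u_{t+1}}\cdots\xrightarrow[v_{t+n-1}]{u_{t+n-1}}f_n$ (starting at time $t\le 0$) there exists a trajectory $\sigma\in[\![f]\!]_{op}$ such that $\sigma(i)=(u_i,v_i)$ for all $t\le i\le t+n-1$.
   Context: Fix a field $k$. Circuits: terms built from generators with sorts $(n,m)$: copier $\Delta:(1,2)$, discard $!:(1,0)$, amplifier $\mathsf{s}_r:(1,1)$ ($r\in k$), register $\mathsf{x}:(1,1)$, adder $+:(2,1)$, zero $0:(0,1)$, one $\mathbf{1}:(0,1)$; mirror images $\Delta^{op}:(2,1)$, $!^{op}:(0,1)$, $\mathsf{s}_r^{op}$, $\mathsf{x}^{op}:(1,1)$, $+^{op}:(1,2)$, $0^{op}:(1,0)$, $\mathbf{1}^{op}:(1,0)$; $\mathrm{id}_0:(0,0),\mathrm{id}_1:(1,1),\mathrm{sw}:(2,2)$; closed under $;$ and $\oplus$. Feedback: for $c:(n+1,m+1)$, $\mathrm{Tr}(c):(n,m)$ connects the last right port of $c$ to its last left port through a register $\mathsf x$, the wire being bent with the cup $!^{op};\Delta:(0,2)$ and the cap $\Delta^{op};!:(2,0)$. Affine signal flow graphs are the circuits in the smallest class containing $\Delta,!,\mathsf s_r,\mathsf x,+,0,\mathbf 1,\mathrm{id}_0,\mathrm{id}_1,\mathrm{sw}$ and closed under $;$, $\oplus$ and $\mathrm{Tr}$. Operational semantics: a state is a circuit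 with a value of $k$ in each register; initial state stores $0$ everywhere. Transitions $t\vdash c\xrightarrow[w]{v}c'$ at time $t\in\mathbb Z$ (moving to time $t+1$): $\Delta$: $a/(a,a)$; $!$: $a/\bullet$; $+$: $(a,b)/a+b$; $0$: $\bullet/0$; $\mathsf s_r$: $a/ra$; $\mathsf x$ storing $b$: $a/b$, then stores $a$; $\mathbf 1$: $\bullet/1$ if $t=0$, $\bullet/0$ otherwise; mirrored generators: same with left/right exchanged; $\mathrm{id}_1$: $a/a$; $\mathrm{sw}$: $(a,b)/(b,a)$; $\mathrm{id}_0$: $\bullet/\bullet$; in $c;d$ both components move at the same time agreeing on the shared middle label; in $c\oplus d$ both move with labels concatenated. A computation starting at $t\le0$ is a sequence of transitions from the initial state at times $t,t+1,\dots$. An $(n,m)$-trajectory is $\sigma:\mathbb Z\to k^n\times k^m$ equal to $(0,0)$ at all sufficiently small indices. $[\![f]\!]_{op}$ is the set of trajectories of infinite computations of $f$: $\sigma(i)=(u_i,v_i)$ (the labels of the transition at time $i$) for $i\ge t$, and $(0,0)$ for $i<t$. *)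

theory Defs
  imports Main
begin

(* Circuit terms over a field 'a.  A register carries its stored value, so a
   term of this datatype is a *state* of a circuit. *)
datatype 'a circ =
    Copy | Disc | Amp 'a | Reg 'a | Add | Zero | One
  | CopyOp | DiscOp | AmpOp 'a | RegOp 'a | AddOp | ZeroOp | OneOp
  | Id0 | Id1 | Sw
  | Seq "'a circ" "'a circ"
  | Par "'a circ" "'a circ"

primrec init :: "'a::zero circ \<Rightarrow> 'a circ" where
  "init Copy = Copy" | "init Disc = Disc" | "init (Amp r) = Amp r"
| "init (Reg b) = Reg 0" | "init Add = Add" | "init Zero = Zero" | "init One = One"
| "init CopyOp = CopyOp" | "init DiscOp = DiscOp" | "init (AmpOp r) = AmpOp r"
| "init (RegOp b) = RegOp 0" | "init AddOp = AddOp" | "init ZeroOp = ZeroOp"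
| "init OneOp = OneOp" | "init Id0 = Id0" | "init Id1 = Id1" | "init Sw = Sw"
| "init (Seq c d) = Seq (init c) (init d)"
| "init (Par c d) = Par (init c) (init d)"

primrec idn :: "nat \<Rightarrow> 'a circ" where
  "idn 0 = Id0"
| "idn (Suc n) = Par Id1 (idn n)"

definition cup :: "'a circ" where "cup = Seq DiscOp Copy"
definition cap :: "'a circ" where "cap = Seq CopyOp Disc"

(* feedback Tr(c) : (n,m) for c : (n+1,m+1): last right port of c goes through
   a register (initially storing 0) and is bent back to the last left port *)
definition Tr :: "nat \<Rightarrow> nat \<Rightarrow> 'a::zero circ \<Rightarrow> 'a circ" where
  "Tr n m c =
     Seq (Seq (Seq (Par (idn n) cup) (Par c Id1))
              (Par (idn m) (Par (Reg 0) Id1)))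
         (Par (idn m) cap)"

inductive asfg :: "'a::field circ \<Rightarrow> nat \<Rightarrow> nat \<Rightarrow> bool" where
  "asfg Copy 1 2"
| "asfg Disc 1 0"
| "asfg (Amp r) 1 1"
| "asfg (Reg 0) 1 1"
| "asfg Add 2 1"
| "asfg Zero 0 1"
| "asfg One 0 1"
| "asfg Id0 0 0"
| "asfg Id1 1 1"
| "asfg Sw 2 2"
| "asfg c n k \<Longrightarrow> asfg d k m \<Longrightarrow> asfg (Seq c d) n m"
| "asfg c n1 m1 \<Longrightarrow> asfg d n2 m2 \<Longrightarrow> asfg (Par c d) (n1 + n2) (m1 + m2)"
| "asfg c (Suc n) (Suc m) \<Longrightarrow> asfg (Tr n m c) n m"

(* transitions  t |- c --u/v--> c'  (left label u, right label v) *)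
inductive step :: "int \<Rightarrow> 'a::field circ \<Rightarrow> 'a list \<Rightarrow> 'a list \<Rightarrow> 'a circ \<Rightarrow> bool" where
  "step t Copy [a] [a, a] Copy"
| "step t Disc [a] [] Disc"
| "step t Add [a, b] [a + b] Add"
| "step t Zero [] [0] Zero"
| "step t (Amp r) [a] [r * a] (Amp r)"
| "step t (Reg b) [a] [b] (Reg a)"
| "step t One [] [if t = 0 then 1 else 0] One"
| "step t CopyOp [a, a] [a] CopyOp"
| "step t DiscOp [] [a] DiscOp"
| "step t AddOp [a + b] [a, b] AddOp"
| "step t ZeroOp [0] [] ZeroOp"
| "step t (AmpOp r) [r * a] [a] (AmpOp r)"
| "step t (RegOp b) [b] [a] (RegOp a)"
| "step t OneOp [if t = 0 then 1 else 0] [] OneOp"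
| "step t Id0 [] [] Id0"
| "step t Id1 [a] [a] Id1"
| "step t Sw [a, b] [b, a] Sw"
| "step t c u w c' \<Longrightarrow> step t d w v d' \<Longrightarrow> step t (Seq c d) u v (Seq c' d')"
| "step t c u1 v1 c' \<Longrightarrow> step t d u2 v2 d' \<Longrightarrow>
     step t (Par c d) (u1 @ u2) (v1 @ v2) (Par c' d')"

definition trajectory :: "nat \<Rightarrow> nat \<Rightarrow> (int \<Rightarrow> 'a::zero list \<times> 'a list) \<Rightarrow> bool" where
  "trajectory n m \<sigma> \<longleftrightarrow>
     (\<forall>i. length (fst (\<sigma> i)) = n \<and> length (snd (\<sigma> i)) = m) \<and>
     (\<exists>N. \<forall>i<N. \<sigma> i = (replicate n 0, replicate m 0))"

definition opsem :: "nat \<Rightarrow> nat \<Rightarrow> 'a::field circ \<Rightarrow> (int \<Rightarrow> 'a list \<times> 'a list) set" where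
  "opsem n m f = {\<sigma>. trajectory n m \<sigma> \<and>
     (\<exists>t::int. t \<le> 0 \<and> (\<exists>g :: nat \<Rightarrow> 'a circ.
        g 0 = init f \<and>
        (\<forall>j. step (t + int j) (g j) (fst (\<sigma> (t + int j))) (snd (\<sigma> (t + int j))) (g (Suc j))) \<and>
        (\<forall>i<t. \<sigma> i = (replicate n 0, replicate m 0))))}"

end

theory Submission imports Defs begin

definition TrS :: "nat \<Rightarrow> nat \<Rightarrow> 'a circ \<Rightarrow> 'a \<Rightarrow> 'a circ" where
  "TrS n m c s =
     Seq (Seq (Seq (Par (idn n) cup) (Par c Id1))
              (Par (idn m) (Par (Reg s) Id1)))
         (Par (idn m) cap)"

inductive asfgs :: "'a::field circ \<Rightarrow> nat \<Rightarrow> nat \<Rightarrow> bool" where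
  "asfgs Copy 1 2"
| "asfgs Disc 1 0"
| "asfgs (Amp r) 1 1"
| "asfgs (Reg b) 1 1"
| "asfgs Add 2 1"
| "asfgs Zero 0 1"
| "asfgs One 0 1"
| "asfgs Id0 0 0"
| "asfgs Id1 1 1"
| "asfgs Sw 2 2"
| "asfgs c n k \<Longrightarrow> asfgs d k m \<Longrightarrow> asfgs (Seq c d) n m"
| "asfgs c n1 m1 \<Longrightarrow> asfgs d n2 m2 \<Longrightarrow> asfgs (Par c d) (n1 + n2) (m1 + m2)"
| "asfgs c (Suc n) (Suc m) \<Longrightarrow> asfgs (TrS n m c s) n m"

lemma init_idn[simp]: "init (idn n) = idn n"
  by (induction n) auto

lemma asfg_init: "asfg f n m \<Longrightarrow> asfgs (init f) n m"
proof (induction rule: asfg.induct)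
  case (13 c n m)
  then show ?case using asfgs.intros(13)[OF 13(2), of 0]
    by (simp add: Tr_def TrS_def cup_def cap_def)
qed (auto intro: asfgs.intros[simplified])

inductive_cases stSeq: "step t (Seq c d) u v e"
inductive_cases stPar: "step t (Par c d) u v e"
inductive_cases stCopy: "step t Copy u v e"
inductive_cases stDisc: "step t Disc u v e"
inductive_cases stAmp: "step t (Amp r) u v e"
inductive_cases stReg: "step t (Reg r) u v e"
inductive_cases stAdd: "step t Add u v e"
inductive_cases stZero: "step t Zero u v e"
inductive_cases stOne: "step t One u v e"
inductive_cases stId0: "step t Id0 u v e"
inductive_cases stId1: "step t Id1 u v e"
inductive_cases stSw: "step t Sw u v e"
inductive_cases stCopyOp: "step t CopyOp u v e"
inductive_cases stDiscOp: "step t DiscOp u v e"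

lemma idn_step: "step t (idn n) u v e \<Longrightarrow> u = v \<and> length u = n \<and> e = idn n"
proof (induction n arbitrary: u v e)
  case 0 then show ?case by (auto elim: stId0)
next
  case (Suc n) then show ?case by (auto elim!: stPar stId1)
qed

lemma idn_step_ex: "length u = n \<Longrightarrow> step t (idn n) u u (idn n)"
proof (induction n arbitrary: u)
  case 0 then show ?case by (auto intro: step.intros)
next
  case (Suc n)
  then obtain a w where "u = [a] @ w" by (cases u) auto
  then show ?case using Suc step.intros(16,19) by fastforce
qed

lemma cup_step: "step t cup u v e \<Longrightarrow> \<exists>a. u = [] \<and> v = [a,a] \<and> e = cup"
  unfolding cup_def by (auto elim!: stSeq stDiscOp stCopy)

lemma cap_step: "step t cap u v e \<Longrightarrow> \<exists>a. u = [a,a] \<and> v = [] \<and> e = cap"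
  unfolding cap_def by (auto elim!: stSeq stCopyOp stDisc)

lemma cup_ex: "step t cup [] [a,a] cup"
  unfolding cup_def by (auto intro: step.intros)
lemma cap_ex: "step t cap [a,a] [] cap"
  unfolding cap_def by (auto intro: step.intros)

lemma par_inv: "step t (Par c d) u v e \<Longrightarrow> \<exists>u1 u2 v1 v2 c' d'. u = u1 @ u2 \<and> v = v1 @ v2 \<and> e = Par c' d' \<and> step t c u1 v1 c' \<and> step t d u2 v2 d'"
  by (erule stPar) blast

lemma step_pres: "asfgs c n m \<Longrightarrow> step t c u v c' \<Longrightarrow> length u = n \<and> length v = m \<and> asfgs c' n m"
proof (induction arbitrary: u v c' rule: asfgs.induct)
  case (11 c n k d m)
  from 11(5) obtain w c1 d1 where "step t c u w c1" "step t d w v d1" "c' = Seq c1 d1"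
    by (auto elim!: stSeq)
  then show ?case using 11(3)[of u w c1] 11(4)[of w v d1] asfgs.intros(11)[of c1 n k d1 m] by simp
next
  case (12 c n1 m1 d n2 m2)
  then show ?case by (auto elim!: stPar intro: asfgs.intros)
next
  case (13 c n m s)
  from 13(3) obtain w1 w2 w3 e1 e2 e3 e4 where
    s1: "step t (Par (idn n) cup) u w1 e1" and
    s2: "step t (Par c Id1) w1 w2 e2" and
    s3: "step t (Par (idn m) (Par (Reg s) Id1)) w2 w3 e3" and
    s4: "step t (Par (idn m) cap) w3 v e4" and
    ce: "c' = Seq (Seq (Seq e1 e2) e3) e4"
    unfolding TrS_def by (elim stSeq) blast
  from s1 obtain a where w1: "w1 = u @ [a,a]" and lu: "length u = n" and e1: "e1 = Par (idn n) cup"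
    by (elim stPar) (drule idn_step, drule cup_step, auto)
  from s2 w1 obtain r c1 where c1: "step t c (u @ [a]) r c1" and w2: "w2 = r @ [a]"
     and e2: "e2 = Par c1 Id1"
    by (elim stPar stId1) auto
  from 13(2)[OF c1] have lr: "length r = Suc m" and ac1: "asfgs c1 (Suc n) (Suc m)" by auto
  from s3 w2 lr obtain x b where lx: "length x = m" and w3: "w3 = x @ [s, a]"
    and e3: "e3 = Par (idn m) (Par (Reg b) Id1)"
  proof -
    from par_inv[OF s3] obtain x y v2 d' where x: "w2 = x @ y" "w3 = x @ v2" "e3 = Par (idn m) d'" "length x = m"
      and st: "step t (Par (Reg s) Id1) y v2 d'"
      using idn_step by blast
    from st obtain b a' where "y = [b, a']" "v2 = [s, a']" "d' = Par (Reg b) Id1"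
      by (elim stPar stReg stId1) auto
    moreover have "a' = a"
    proof -
      have "(x @ [b]) @ [a'] = r @ [a]" using x w2 calculation by simp
      then show ?thesis by (simp only: append1_eq_conv)
    qed
    ultimately show ?thesis using that x by auto
  qed
  from s4 obtain x' y v2 d' where x': "w3 = x' @ y" "v = x' @ v2" "e4 = Par (idn m) d'" "length x' = m"
      and st: "step t cap y v2 d'"
      by (elim stPar) (drule idn_step, auto)
  from st obtain z where "y = [z,z]" "v2 = []" "d' = cap" using cap_step by blast
  with x' w3 lx have v: "v = x" and e4: "e4 = Par (idn m) cap" by auto
  have "c' = TrS n m c1 b" unfolding TrS_def ce e1 e2 e3 e4 by simp
  then show ?case using lu lx v ac1 asfgs.intros(13) by blast
qed (fastforce elim: stCopy stDisc stAmp stReg stAdd stZero stOne stId0 stId1 stSw intro: asfgs.intros)+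

lemma step_ex: "asfgs c n m \<Longrightarrow> length u = n \<Longrightarrow> \<exists>v c'. step t c u v c'"
proof (induction arbitrary: u rule: asfgs.induct)
  case (11 c n k d m)
  then obtain w c1 where c1: "step t c u w c1" by blast
  with 11 step_pres have "length w = k" by blast
  then obtain v d1 where "step t d w v d1" using 11(4) by blast
  with c1 show ?case using step.intros(18) by blast
next
  case (12 c n1 m1 d n2 m2)
  then obtain v1 c1 v2 d1 where "step t c (take n1 u) v1 c1" "step t d (drop n1 u) v2 d1" by fastforce
  then show ?case using step.intros(19) by (metis append_take_drop_id)
next
  case (13 c n m s)
  then obtain r c1 where c1: "step t c (u @ [s]) r c1" by fastforce
  with 13 step_pres have "length r = Suc m" by fastforce
  then obtain x b where r: "r = x @ [b]" and lx: "length x = m"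
    by (metis append_butlast_last_id length_butlast diff_Suc_1 length_0_conv nat.distinct(1))
  have a1: "step t (Par (idn n) cup) u (u @ [s,s]) (Par (idn n) cup)"
    using step.intros(19)[OF idn_step_ex[OF 13(3)] cup_ex] by simp
  have a2: "step t (Par c Id1) (u @ [s,s]) (x @ [b] @ [s]) (Par c1 Id1)"
    using step.intros(19)[OF c1 step.intros(16)] r by simp
  have a3: "step t (Par (idn m) (Par (Reg s) Id1)) (x @ [b] @ [s]) (x @ [s,s]) (Par (idn m) (Par (Reg b) Id1))"
    using step.intros(19)[OF idn_step_ex[OF lx] step.intros(19)[OF step.intros(6) step.intros(16)]] by simp
  have a4: "step t (Par (idn m) cap) (x @ [s,s]) x (Par (idn m) cap)"
    using step.intros(19)[OF idn_step_ex[OF lx] cap_ex] by simp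
  show ?case unfolding TrS_def using a1 a2 a3 a4 step.intros(18) by blast
qed (auto intro: step.intros simp: length_Suc_conv numeral_2_eq_2)

theorem proposition9:
  fixes f :: "'a::field circ" and n m :: nat
  assumes "asfg f n m"
    and "t \<le> 0"
    and "g 0 = init f"
    and "\<forall>j<N. step (t + int j) (g j) (u (t + int j)) (v (t + int j)) (g (Suc j))"
  shows "\<exists>\<sigma> \<in> opsem n m f. \<forall>i. t \<le> i \<and> i \<le> t + int N - 1 \<longrightarrow> \<sigma> i = (u i, v i)"
proof -
  have A0: "asfgs (g 0) n m" using asfg_init[OF assms(1)] assms(3) by simp
  have I: "j \<le> N \<Longrightarrow> asfgs (g j) n m" for j
  proof (induction j)
    case 0 then show ?case using A0 by simp
  next
    case (Suc j) then show ?case using assms(4) step_pres by (metis Suc_le_lessD less_imp_le_nat)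
  qed
  define nxt :: "int \<Rightarrow> 'a circ \<Rightarrow> 'a list \<times> 'a circ" where
    "nxt = (\<lambda>k c. SOME p. step k c (replicate n 0) (fst p) (snd p))"
  have nxt: "asfgs c n m \<Longrightarrow> step k c (replicate n 0) (fst (nxt k c)) (snd (nxt k c))" for c k
  proof -
    assume "asfgs c n m"
    then obtain v' c' where "step k c (replicate n 0) v' c'" using step_ex by fastforce
    then have "step k c (replicate n 0) (fst (v', c')) (snd (v', c'))" by simp
    then show ?thesis unfolding nxt_def by (rule someI)
  qed
  define G where "G = rec_nat (g 0) (\<lambda>j c. if j < N then g (Suc j) else snd (nxt (t + int j) c))"
  have G0: "G 0 = g 0" and GS: "G (Suc j) = (if j < N then g (Suc j) else snd (nxt (t + int j) (G j)))" for j
    unfolding G_def by simp_all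
  have Gg: "j \<le> N \<Longrightarrow> G j = g j" for j
    by (cases j) (simp_all add: G0 GS)
  have GA: "asfgs (G j) n m" for j
  proof (induction j)
    case 0 then show ?case using A0 G0 by simp
  next
    case (Suc j)
    show ?case
    proof (cases "j < N")
      case True then show ?thesis using GS I by simp
    next
      case False then show ?thesis using GS step_pres[OF Suc nxt[OF Suc, of "t + int j"]] by simp
    qed
  qed
  define \<sigma> where "\<sigma> = (\<lambda>i. if i < t then (replicate n 0, replicate m (0::'a))
     else if nat (i - t) < N then (u i, v i) else (replicate n 0, fst (nxt i (G (nat (i - t))))))"
  have ST: "step (t + int j) (G j) (fst (\<sigma> (t + int j))) (snd (\<sigma> (t + int j))) (G (Suc j))" for j
  proof (cases "j < N")
    case True
    then show ?thesis using assms(4) Gg GS unfolding \<sigma>_def by simp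
  next
    case False
    then show ?thesis using nxt[OF GA[of j]] GS unfolding \<sigma>_def by simp
  qed
  have LEN: "length (fst (\<sigma> i)) = n \<and> length (snd (\<sigma> i)) = m" for i
  proof (cases "i < t")
    case True then show ?thesis unfolding \<sigma>_def by simp
  next
    case False
    then have i: "i = t + int (nat (i - t))" by simp
    show ?thesis using step_pres[OF GA ST[of "nat (i - t)"]] i by simp
  qed
  have DUMMY: True
    by simp
  have traj: "trajectory n m \<sigma>"
    unfolding trajectory_def using LEN by (auto simp: \<sigma>_def)
  have "\<sigma> \<in> opsem n m f"
  proof -
    have Z: "\<forall>i<t. \<sigma> i = (replicate n 0, replicate m 0)" by (simp add: \<sigma>_def)
    have "G 0 = init f" using G0 assms(3) by simp
    then show ?thesis unfolding opsem_def mem_Collect_eq using traj assms(2) ST Z by blast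
  qed
  moreover have "\<forall>i. t \<le> i \<and> i \<le> t + int N - 1 \<longrightarrow> \<sigma> i = (u i, v i)"
    unfolding \<sigma>_def by auto
  ultimately show ?thesis by blast
qed

end
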